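(* In the setting of the context, assume $G''(p_1)<0$, $G''(p_2)\ge0$ and $G''(p_1)G'(p_2)e^{-K_1}<G''(p_2)G'(p_1)e^{K_1}$, and that $\ell\in(0,\min\{L,1-L\})$ is chosen so that $$(L-\ell)G''(p_1)e^{-K_1}+\big[(1-L-\ell)G''(p_2)+2\ell K_2\big]e^{K_1}<0.$$ Then $I_{\theta_0+c}(1)<0<I_{\theta_0-c}(1)$ for all sufficiently small $c>0$.
   Context: Let $G\in\mathrm{C}^2(\mathbb{R})$ be coercive ($G(p)\to\infty$ as $p\to\pm\infty$), $p_1<p_2$ with $G'(p_1)<0<G'(p_2)$, $L=\frac{G'(p_2)}{G'(p_2)-G'(p_1)}$, $K_1=\max\{|G'(p)|:\,p\in[p_1,p_2]\}$, $K_2=\max\{|G''(p)|:\,p\in[p_1,p_2]\}$. Given $\ell$, let $f$ be a $1$-periodic function in $\mathrm{C}^1(\mathbb{R})$ with $f'$ Lipschitz, $p_1\le f\le p_2$, $f=p_1$ on $[0,L-\ell]$, $f=p_2$ on $[L,1-\ell]$, and $\int_0^1G'(f(x))dx=0$. Define the $1$-periodic Lipschitz potential $V(x)=-f'(x)-G(f(x))$ and $\theta_0=\int_0^1f(x)dx$. For each $\theta\in\mathbb{R}$, $f_\theta\in\mathrm{C}^1(\mathbb{R})$ denotes the unique $1$-periodic function with $\int_0^1f_\theta=\theta$ and $f_\theta'+G(f_\theta)+V=\overline{H}(\theta)$ on $\mathbb{R}$ for some (unique) constant $\overline{H}(\theta)$; and $I_\theta(1)=\int_0^1G'(f_\theta(x))dx$.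 *)

theory Defs
  imports "HOL-Analysis.Analysis"
begin

definition per_sol :: "(real \<Rightarrow> real) \<Rightarrow> (real \<Rightarrow> real) \<Rightarrow> real \<Rightarrow> (real \<Rightarrow> real) \<Rightarrow> bool" where
  "per_sol G V \<theta> g \<longleftrightarrow>
     (\<forall>x. g (x + 1) = g x) \<and>
     (\<exists>g'. (\<forall>x. (g has_real_derivative g' x) (at x)) \<and> continuous_on UNIV g' \<and>
           (\<exists>H. \<forall>x. g' x + G (g x) + V x = H)) \<and>
     integral {0..1} g = \<theta>"

text \<open>f_theta: the unique such solution (the context asserts existence and uniqueness).\<close>
definition f_theta :: "(real \<Rightarrow> real) \<Rightarrow> (real \<Rightarrow> real) \<Rightarrow> real \<Rightarrow> real \<Rightarrow> real" where
  "f_theta G V \<theta> = (THE g. per_sol G V \<theta> g)"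

definition I_one :: "(real \<Rightarrow> real) \<Rightarrow> (real \<Rightarrow> real) \<Rightarrow> (real \<Rightarrow> real) \<Rightarrow> real \<Rightarrow> real" where
  "I_one G G' V \<theta> = integral {0..1} (\<lambda>x. G' (f_theta G V \<theta> x))"

end

theory Submission
  imports Defs
begin


lemma per_nat:
  fixes p :: "real \<Rightarrow> 'a"
  assumes "\<And>x. p (x + 1) = (p x :: 'a)"
  shows "p (x + real m) = p x"
proof (induction m arbitrary: x)
  case 0 then show ?case by simp
next
  case (Suc m)
  have "p (x + real (Suc m)) = p ((x + real m) + 1)" by (simp add: algebra_simps)
  also have "\<dots> = p (x + real m)" by (rule assms)
  also have "\<dots> = p x" by (rule Suc)
  finally show ?case .
qed

lemma per_int:
  fixes p :: "real \<Rightarrow> 'a"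
  assumes "\<And>x. p (x + 1) = (p x :: 'a)"
  shows "p (x + real_of_int n) = p x"
proof (cases "n \<ge> 0")
  case True
  define m where "m = nat n"
  have "n = int m" using True by (simp add: m_def)
  then show ?thesis using per_nat[of p, OF assms] by simp
next
  case False
  define m where "m = nat (- n)"
  have m: "n = - int m" using False by (simp add: m_def)
  have "p x = p ((x - real m) + real m)" by simp
  also have "\<dots> = p (x - real m)" using per_nat[of p, OF assms] by blast
  finally show ?thesis using m by simp
qed

lemma per_frac:
  fixes p :: "real \<Rightarrow> 'a"
  assumes "\<And>x. p (x + 1) = (p x :: 'a)"
  shows "p x = p (x - real_of_int \<lfloor>x\<rfloor>)" "x - real_of_int \<lfloor>x\<rfloor> \<in> {0..1}"
proof -
  show "p x = p (x - real_of_int \<lfloor>x\<rfloor>)"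
    using per_int[of p, OF assms, of "x - real_of_int \<lfloor>x\<rfloor>" "\<lfloor>x\<rfloor>"] by simp
  show "x - real_of_int \<lfloor>x\<rfloor> \<in> {0..1}"
    using frac_lt_1[of x] frac_ge_0[of x] by (simp add: frac_def)
qed

lemma per_all:
  fixes p :: "real \<Rightarrow> 'a"
  assumes "\<And>x. p (x + 1) = (p x :: 'a)" and "\<And>x. x \<in> {0..1} \<Longrightarrow> P (p x)"
  shows "P (p y)"
proof -
  have "p y = p (y - real_of_int \<lfloor>y\<rfloor>)" "y - real_of_int \<lfloor>y\<rfloor> \<in> {0..1}"
    using per_frac[of p, OF assms(1)] by blast+
  then show ?thesis using assms(2)[of "y - real_of_int \<lfloor>y\<rfloor>"] by simp
qed

lemma int_cont: "continuous_on UNIV q \<Longrightarrow> (q::real\<Rightarrow>real) integrable_on {a..b}"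
  by (rule integrable_continuous_real) (rule continuous_on_subset[OF _ subset_UNIV])

definition Prim :: "(real \<Rightarrow> real) \<Rightarrow> real \<Rightarrow> real" where
  "Prim q x = integral {0..x} q - integral {x..0} q"

lemma integral_rev0: "b \<le> (a::real) \<Longrightarrow> integral {a..b} q = 0"
proof -
  assume "b \<le> a"
  then have "Henstock_Kurzweil_Integration.content (cbox a b) = 0" by (simp add: content_real_eq_0)
  then show ?thesis by (metis box_real(2) integral_null)
qed

lemma Prim_pos: "0 \<le> x \<Longrightarrow> Prim q x = integral {0..x} q"
  by (simp add: Prim_def integral_rev0)

lemma Prim_0[simp]: "Prim q 0 = 0"
  by (simp add: Prim_pos)

lemma Prim_local:
  assumes "continuous_on UNIV q" "y \<in> {-n..n}"
  shows "Prim q y = integral {-n..y} q - integral {-n..0} q"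
proof (cases "0 \<le> y")
  case True
  have "integral {-n..0} q + integral {0..y} q = integral {-n..y} q"
    using assms True by (intro Henstock_Kurzweil_Integration.integral_combine int_cont) auto
  then show ?thesis using True by (simp add: Prim_pos)
next
  case False
  have "integral {-n..y} q + integral {y..0} q = integral {-n..0} q"
    using assms False by (intro Henstock_Kurzweil_Integration.integral_combine int_cont) auto
  then show ?thesis using False by (simp add: Prim_def integral_rev0)
qed

lemma Prim_deriv:
  assumes "continuous_on UNIV q"
  shows "(Prim q has_real_derivative q x) (at x)"
proof -
  define n where "n = \<bar>x\<bar> + 1"
  have xin: "x \<in> {-n<..<n}" unfolding n_def by (simp add: abs_if)
  have "((\<lambda>y. integral {-n..y} q) has_real_derivative q x) (at x within {-n..n})"
    apply (rule integral_has_real_derivative)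
    using xin continuous_on_subset[OF assms subset_UNIV] apply blast
    using xin by simp
  moreover have "x \<in> interior {-n..n}" using xin interior_atLeastAtMost_real by blast
  ultimately have "((\<lambda>y. integral {-n..y} q) has_real_derivative q x) (at x)"
    by (metis at_within_interior)
  then have d: "((\<lambda>y. integral {-n..y} q - integral {-n..0} q) has_real_derivative q x) (at x)"
    by (rule DERIV_diff[where E=0, simplified]) (rule DERIV_const)
  have e: "\<And>y. y \<in> {-n<..<n} \<Longrightarrow> integral {-n..y} q - integral {-n..0} q = Prim q y"
    using Prim_local[OF assms] by (metis atLeastAtMost_iff greaterThanLessThan_iff less_imp_le)
  show ?thesis
    by (rule has_field_derivative_transform_within_open[OF d open_greaterThanLessThan xin e])
qed


lemma Prim_cont: "continuous_on UNIV q \<Longrightarrow> continuous_on UNIV (Prim q)"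
  using Prim_deriv by (meson DERIV_continuous continuous_at_imp_continuous_on)

lemma Prim_diff:
  assumes "continuous_on UNIV q1" "continuous_on UNIV q2"
  shows "Prim (\<lambda>s. q1 s - q2 s) x = Prim q1 x - Prim q2 x"
proof -
  show ?thesis unfolding Prim_def using int_cont[OF assms(1)] int_cont[OF assms(2)]
    by (simp add: integral_diff)
qed

lemma Prim_per:
  assumes "continuous_on UNIV q" "\<And>x. q (x + 1) = q x"
  shows "Prim q (x + 1) = Prim q x + integral {0..1} q"
proof -
  have "\<forall>y. ((\<lambda>y. Prim q (y + 1) - Prim q y) has_real_derivative 0) (at y)"
  proof
    fix y
    have "((\<lambda>y. Prim q (y + 1)) has_real_derivative q (y + 1)) (at y)"
      using Prim_deriv[OF assms(1), of "y+1"] DERIV_shift by blast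
    then have "((\<lambda>y. Prim q (y + 1) - Prim q y) has_real_derivative q (y+1) - q y) (at y)"
      by (intro derivative_intros Prim_deriv assms)
    then show "((\<lambda>y. Prim q (y + 1) - Prim q y) has_real_derivative 0) (at y)"
      using assms(2) by simp
  qed
  from DERIV_isconst_all[OF this, of x 0] show ?thesis by (simp add: Prim_pos)
qed

lemma int_bound01:
  fixes q :: "real \<Rightarrow> real"
  assumes "continuous_on UNIV q" "\<And>s. s \<in> {0..1} \<Longrightarrow> \<bar>q s\<bar> \<le> B" "x \<in> {0..1}"
  shows "\<bar>integral {0..x} q\<bar> \<le> B"
proof -
  have "\<bar>q 0\<bar> \<le> B" using assms(2)[of 0] by simp
  then have B: "0 \<le> B" by linarith
  have "(q has_integral integral {0..x} q) (cbox 0 x)"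
    using assms by (auto intro!: integrable_integral int_cont)
  from has_integral_bound[OF B this] assms
  have "norm (integral {0..x} q) \<le> B * Henstock_Kurzweil_Integration.content (cbox 0 x)" by auto
  also have "\<dots> \<le> B" using assms(3) B by (simp add: mult_left_le)
  finally show ?thesis by simp
qed

lemma Prim_bound01:
  fixes q :: "real \<Rightarrow> real"
  assumes "continuous_on UNIV q" "\<And>s. s \<in> {0..1} \<Longrightarrow> \<bar>q s\<bar> \<le> B" "x \<in> {0..1}"
  shows "\<bar>Prim q x\<bar> \<le> B"
  using int_bound01[OF assms] assms(3) by (simp add: Prim_pos)

lemma int01_mono:
  fixes q1 q2 :: "real \<Rightarrow> real"
  assumes "continuous_on UNIV q1" "continuous_on UNIV q2" "\<And>s. s \<in> {0..1} \<Longrightarrow> q1 s \<le> q2 s"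
  shows "integral {0..1} q1 \<le> integral {0..1} q2"
  using assms by (intro Henstock_Kurzweil_Integration.integral_le int_cont) auto

lemma lip_bound:
  fixes \<phi> \<phi>' :: "real \<Rightarrow> real"
  assumes "\<And>t. t \<in> {lo..hi} \<Longrightarrow> (\<phi> has_real_derivative \<phi>' t) (at t)"
    and "\<And>t. t \<in> {lo..hi} \<Longrightarrow> \<bar>\<phi>' t\<bar> \<le> B"
    and "x \<in> {lo..hi}" "y \<in> {lo..hi}"
  shows "\<bar>\<phi> x - \<phi> y\<bar> \<le> B * \<bar>x - y\<bar>"
proof -
  have *: "\<bar>\<phi> b - \<phi> a\<bar> \<le> B * \<bar>b - a\<bar>" if "a < b" "a \<in> {lo..hi}" "b \<in> {lo..hi}" for a b
  proof -
    have "\<exists>z. a < z \<and> z < b \<and> (\<phi> b - \<phi> a = (b - a) * \<phi>' z)"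
      by (rule MVT2[OF \<open>a < b\<close>]) (use assms(1) that in auto)
    then obtain z where z: "a < z" "z < b" "\<phi> b - \<phi> a = (b - a) * \<phi>' z" by blast
    have "z \<in> {lo..hi}" using z that by auto
    then have "\<bar>\<phi>' z\<bar> \<le> B" by (rule assms(2))
    then show ?thesis using z that by (simp add: abs_mult mult.commute mult_right_mono)
  qed
  consider "x < y" | "x = y" | "y < x" by linarith
  then show ?thesis
  proof cases
    case 1 then have "\<bar>\<phi> y - \<phi> x\<bar> \<le> B * \<bar>y - x\<bar>" using *[of x y] assms(3,4) by blast
    then show ?thesis by (metis abs_minus_commute)
  next
    case 2 then show ?thesis by simp
  next
    case 3 then show ?thesis using *[of y x] assms(3,4) by blast
  qed
qed



lemma int_cmul:
  fixes f :: "real \<Rightarrow> real" and S :: "real set"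
  shows "integral S (\<lambda>x. c * f x) = c * integral S (f :: real \<Rightarrow> real)"
  using integral_cmul[of S c f] by simp

lemma int_cmul2:
  fixes f :: "real \<Rightarrow> real" and S :: "real set"
  shows "integral S (\<lambda>x. f x * c) = integral S (f :: real \<Rightarrow> real) * c"
  using integral_cmul[of S c f] by (simp add: mult.commute)

lemma deriv_cont: "(\<And>x. (g has_real_derivative g' x) (at x)) \<Longrightarrow> continuous_on UNIV g"
  by (meson DERIV_continuous continuous_at_imp_continuous_on)

definition cp :: "(real \<Rightarrow> real) \<Rightarrow> bool" where
  "cp q \<longleftrightarrow> continuous_on UNIV q \<and> (\<forall>x. q (x + 1) = q x)"

lemma cpD: "cp q \<Longrightarrow> continuous_on UNIV q" "cp q \<Longrightarrow> q (x + 1) = q x"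
  by (auto simp: cp_def)

lemma cp_bounded: assumes "cp q" obtains B where "B \<ge> 0" "\<And>x. \<bar>q x\<bar> \<le> B"
proof -
  have "compact (q ` {0..1})"
    by (intro compact_continuous_image continuous_on_subset[OF cpD(1)[OF assms] subset_UNIV] compact_Icc)
  then have "bounded (q ` {0..1})" by (rule compact_imp_bounded)
  then obtain B where B: "B > 0" "\<forall>y \<in> q ` {0..1}. norm y \<le> B"
    unfolding bounded_pos by blast
  have "\<bar>q x\<bar> \<le> B" for x
  proof (rule per_all[of q "\<lambda>v. \<bar>v\<bar> \<le> B"])
    show "q (x + 1) = q x" for x by (rule cpD(2)[OF assms])
    show "\<bar>q x\<bar> \<le> B" if "x \<in> {0..1}" for x using B(2) that by simp
  qed
  then show ?thesis using that B(1) by (meson less_imp_le)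
qed

locale ctx =
  fixes G G' G'' f f' :: "real \<Rightarrow> real" and p1 p2 l L K1 K2 :: real
  assumes G_deriv: "\<And>x. (G has_real_derivative G' x) (at x)"
    and G'_deriv: "\<And>x. (G' has_real_derivative G'' x) (at x)"
    and G''_cont: "continuous_on UNIV G''"
    and p12: "p1 < p2"
    and Gp1: "G' p1 < 0" and Gp2: "0 < G' p2"
    and L_def: "L = G' p2 / (G' p2 - G' p1)"
    and K1_def: "K1 = Sup ((\<lambda>p. \<bar>G' p\<bar>) ` {p1..p2})"
    and K2_def: "K2 = Sup ((\<lambda>p. \<bar>G'' p\<bar>) ` {p1..p2})"
    and f_per: "\<And>x. f (x + 1) = f x"
    and f_deriv: "\<And>x. (f has_real_derivative f' x) (at x)"
    and f'_lip: "\<exists>M. lipschitz_on M UNIV f'"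
    and f_bounds: "\<And>x. p1 \<le> f x \<and> f x \<le> p2"
    and f_p1: "\<And>x. x \<in> {0..L - l} \<Longrightarrow> f x = p1"
    and f_p2: "\<And>x. x \<in> {L..1 - l} \<Longrightarrow> f x = p2"
    and f_int: "integral {0..1} (\<lambda>x. G' (f x)) = 0"
    and G''p1: "G'' p1 < 0" and G''p2: "G'' p2 \<ge> 0"
    and ell_pos: "0 < l" and ell_lt: "l < min L (1 - L)"
    and ell_cond: "(L - l) * G'' p1 * exp (- K1)
                   + ((1 - L - l) * G'' p2 + 2 * l * K2) * exp K1 < 0"
begin

lemma G_cont: "continuous_on UNIV G" by (rule deriv_cont[OF G_deriv])
lemma G'_cont: "continuous_on UNIV G'" by (rule deriv_cont[OF G'_deriv])
lemma f_cont: "continuous_on UNIV f" by (rule deriv_cont[OF f_deriv])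
lemma f'_cont: "continuous_on UNIV f'"
  using f'_lip lipschitz_on_continuous_on by blast

definition a :: "real \<Rightarrow> real" where "a x = G' (f x)"
definition \<Phi> :: "real \<Rightarrow> real" where "\<Phi> = Prim a"
definition ek :: real where "ek = exp K1"

lemma a_fun: "a = (\<lambda>x. G' (f x))" by (rule ext) (simp add: a_def)

lemma a_cp: "cp a"
  unfolding cp_def a_def using f_per
  by (auto intro!: continuous_on_compose2[OF G'_cont f_cont])

lemma a_cont: "continuous_on UNIV a" using a_cp cpD by blast

lemma absG'_cont: "continuous_on UNIV (\<lambda>p. \<bar>G' p\<bar>)"
  by (rule continuous_on_rabs[OF G'_cont])
lemma absG''_cont: "continuous_on UNIV (\<lambda>p. \<bar>G'' p\<bar>)"
  by (rule continuous_on_rabs[OF G''_cont])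

lemma K1_bound: "p \<in> {p1..p2} \<Longrightarrow> \<bar>G' p\<bar> \<le> K1"
  unfolding K1_def
  by (rule cSUP_upper) (auto intro!: bounded_imp_bdd_above compact_imp_bounded compact_continuous_image
      continuous_on_subset[OF absG'_cont])

lemma K2_bound: "p \<in> {p1..p2} \<Longrightarrow> \<bar>G'' p\<bar> \<le> K2"
  unfolding K2_def
  by (rule cSUP_upper) (auto intro!: bounded_imp_bdd_above compact_imp_bounded compact_continuous_image
      continuous_on_subset[OF absG''_cont])

lemma a_bound: "\<bar>a x\<bar> \<le> K1"
  unfolding a_def using K1_bound f_bounds by simp

lemma K1_nonneg: "0 \<le> K1" using a_bound[of 0] by linarith

lemma \<Phi>_deriv: "(\<Phi> has_real_derivative a x) (at x)"
  unfolding \<Phi>_def by (rule Prim_deriv[OF a_cont])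

lemma \<Phi>_cont: "continuous_on UNIV \<Phi>" by (rule deriv_cont[OF \<Phi>_deriv])

lemma \<Phi>_per: "\<Phi> (x + 1) = \<Phi> x"
  unfolding \<Phi>_def using Prim_per[OF a_cont cpD(2)[OF a_cp], of x] f_int a_fun by simp

lemma \<Phi>_cp: "cp \<Phi>" using \<Phi>_cont \<Phi>_per cp_def by blast

lemma \<Phi>_bound: "\<bar>\<Phi> x\<bar> \<le> K1"
proof (rule per_all[of \<Phi> "\<lambda>v. \<bar>v\<bar> \<le> K1"])
  show "\<Phi> (x + 1) = \<Phi> x" for x by (rule \<Phi>_per)
  show "\<bar>\<Phi> x\<bar> \<le> K1" if "x \<in> {0..1}" for x
    unfolding \<Phi>_def using Prim_bound01[OF a_cont a_bound that] .
qed

lemma ek_pos: "0 < ek" unfolding ek_def by simp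
lemma ek_ge1: "1 \<le> ek" unfolding ek_def using K1_nonneg by simp

lemma exp\<Phi>_le: "exp (\<Phi> x) \<le> ek" "exp (- \<Phi> x) \<le> ek"
  unfolding ek_def using \<Phi>_bound[of x] by auto

lemma exp\<Phi>_ge: "1 / ek \<le> exp (\<Phi> x)" "1 / ek \<le> exp (- \<Phi> x)"
proof -
  have "exp (- K1) \<le> exp (\<Phi> x)" "exp (- K1) \<le> exp (- \<Phi> x)" using \<Phi>_bound[of x] by auto
  then show "1 / ek \<le> exp (\<Phi> x)" "1 / ek \<le> exp (- \<Phi> x)" unfolding ek_def by (simp_all add: exp_minus field_simps)
qed

lemma cp_exp\<Phi>: "cp (\<lambda>x. exp (\<Phi> x))" "cp (\<lambda>x. exp (- \<Phi> x))"
  unfolding cp_def using \<Phi>_per by (auto intro!: continuous_intros \<Phi>_cont)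

lemma cp_mult: "cp q1 \<Longrightarrow> cp q2 \<Longrightarrow> cp (\<lambda>x. q1 x * q2 x)"
  unfolding cp_def by (auto intro!: continuous_intros)

lemma cp_diff: "cp q1 \<Longrightarrow> cp q2 \<Longrightarrow> cp (\<lambda>x. q1 x - q2 x)"
  unfolding cp_def by (auto intro!: continuous_intros)

lemma cp_add: "cp q1 \<Longrightarrow> cp q2 \<Longrightarrow> cp (\<lambda>x. q1 x + q2 x)"
  unfolding cp_def by (auto intro!: continuous_intros)

lemma cp_const: "cp (\<lambda>x. c)"
  unfolding cp_def by auto

definition pden :: real where "pden = integral {0..1} (\<lambda>x. exp (\<Phi> x))"
definition wden :: real where "wden = integral {0..1} (\<lambda>x. exp (- \<Phi> x))"

lemma pden_ge: "1 / ek \<le> pden"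
proof -
  have "integral {0..1} (\<lambda>x::real. 1 / ek) \<le> pden"
    unfolding pden_def by (rule int01_mono[of "\<lambda>x. 1 / ek" "\<lambda>x. exp (\<Phi> x)"]) (use cp_exp\<Phi> cpD exp\<Phi>_ge in auto)
  then show ?thesis by simp
qed

lemma wden_ge: "1 / ek \<le> wden"
proof -
  have "integral {0..1} (\<lambda>x::real. 1 / ek) \<le> wden"
    unfolding wden_def by (rule int01_mono[of "\<lambda>x. 1 / ek" "\<lambda>x. exp (- \<Phi> x)"]) (use cp_exp\<Phi> cpD exp\<Phi>_ge in auto)
  then show ?thesis by simp
qed

lemma pden_pos: "0 < pden" using pden_ge ek_pos by (meson less_le_trans zero_less_divide_1_iff)
lemma wden_pos: "0 < wden" using wden_ge ek_pos by (meson less_le_trans zero_less_divide_1_iff)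


lemma div_bound:
  fixes A D X e :: real
  assumes "0 < e" "1 / e \<le> D" "\<bar>A\<bar> \<le> X"
  shows "\<bar>A / D\<bar> \<le> X * e"
proof -
  have D: "0 < D" using assms(1,2) by (meson less_le_trans zero_less_divide_1_iff)
  have eD: "1 \<le> e * D" using assms(2) \<open>0 < e\<close> by (simp add: divide_le_eq mult.commute)
  have X0: "0 \<le> X" using abs_ge_zero[of A] assms(3) by linarith
  have "X * 1 \<le> X * (e * D)" by (rule mult_left_mono[OF eD X0])
  then have "\<bar>A\<bar> \<le> (X * e) * D" using assms(3) by (simp add: mult.assoc)
  then have "\<bar>A\<bar> / D \<le> X * e" by (simp add: pos_divide_le_eq[OF D])
  then show ?thesis using D by (simp add: abs_divide)
qed

definition hq :: "(real \<Rightarrow> real) \<Rightarrow> real" where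
  "hq q = integral {0..1} (\<lambda>s. q s * exp (\<Phi> s)) / pden"
definition Fq :: "(real \<Rightarrow> real) \<Rightarrow> real \<Rightarrow> real" where
  "Fq q s = (hq q - q s) * exp (\<Phi> s)"
definition C0 :: "(real \<Rightarrow> real) \<Rightarrow> real" where
  "C0 q = - integral {0..1} (\<lambda>x. exp (- \<Phi> x) * Prim (Fq q) x) / wden"
definition S0 :: "(real \<Rightarrow> real) \<Rightarrow> real \<Rightarrow> real" where
  "S0 q x = exp (- \<Phi> x) * (C0 q + Prim (Fq q) x)"
definition w :: "real \<Rightarrow> real" where
  "w x = exp (- \<Phi> x) / wden"
definition Qc :: real where "Qc = ek * ek * (ek * ek + 1) * (ek * ek + 1)"

lemma Fq_fun: "Fq q = (\<lambda>s. (hq q - q s) * exp (\<Phi> s))"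
  by (rule ext) (simp add: Fq_def)

lemma Fq_cp: "cp q \<Longrightarrow> cp (Fq q)"
  unfolding Fq_fun by (intro cp_mult cp_diff cp_const cp_exp\<Phi>)

lemma Fq_int:
  assumes "cp q"
  shows "integral {0..1} (Fq q) = 0"
proof -
  have e: "Fq q = (\<lambda>s. hq q * exp (\<Phi> s) - q s * exp (\<Phi> s))"
    unfolding Fq_fun by (simp add: algebra_simps)
  have c1: "continuous_on UNIV (\<lambda>s. hq q * exp (\<Phi> s))"
    using cpD(1)[OF cp_mult[OF cp_const cp_exp\<Phi>(1)]] .
  have c2: "continuous_on UNIV (\<lambda>s. q s * exp (\<Phi> s))"
    using cpD(1)[OF cp_mult[OF assms cp_exp\<Phi>(1)]] .
  have "integral {0..1} (Fq q) = integral {0..1} (\<lambda>s. hq q * exp (\<Phi> s)) - integral {0..1} (\<lambda>s. q s * exp (\<Phi> s))"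
    unfolding e by (rule integral_diff[OF int_cont[OF c1] int_cont[OF c2]])
  also have "\<dots> = hq q * pden - integral {0..1} (\<lambda>s. q s * exp (\<Phi> s))"
    unfolding pden_def int_cmul ..
  also have "\<dots> = 0" unfolding hq_def using pden_pos by simp
  finally show ?thesis .
qed

lemma PF_cp:
  assumes "cp q" shows "cp (Prim (Fq q))"
  unfolding cp_def
proof
  show "continuous_on UNIV (Prim (Fq q))" by (rule Prim_cont[OF cpD(1)[OF Fq_cp[OF assms]]])
  show "\<forall>x. Prim (Fq q) (x + 1) = Prim (Fq q) x"
    using Prim_per[OF cpD(1)[OF Fq_cp[OF assms]] cpD(2)[OF Fq_cp[OF assms]]] Fq_int[OF assms] by simp
qed

lemma S0_fun: "S0 q = (\<lambda>x. exp (- \<Phi> x) * (C0 q + Prim (Fq q) x))"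
  by (rule ext) (simp add: S0_def)

lemma S0_cp: "cp q \<Longrightarrow> cp (S0 q)"
  unfolding S0_fun
  by (intro cp_mult cp_exp\<Phi> cp_add cp_const PF_cp)

lemma w_fun: "w = (\<lambda>x. exp (- \<Phi> x) * (1 / wden))"
  by (rule ext) (simp add: w_def)

lemma w_cp: "cp w"
  unfolding w_fun by (intro cp_mult cp_exp\<Phi> cp_const)

lemma S0_deriv:
  assumes "cp q"
  shows "(S0 q has_real_derivative (- a x * S0 q x + (hq q - q x))) (at x)"
proof -
  have d1: "((\<lambda>x. exp (- \<Phi> x)) has_real_derivative exp (- \<Phi> x) * (- a x)) (at x)"
    by (rule DERIV_chain2[OF DERIV_exp]) (rule DERIV_minus[OF \<Phi>_deriv])
  have d2: "((\<lambda>x. C0 q + Prim (Fq q) x) has_real_derivative 0 + Fq q x) (at x)"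
    by (rule DERIV_add[OF DERIV_const Prim_deriv[OF cpD(1)[OF Fq_cp[OF assms]]]])
  have "(S0 q has_real_derivative
      exp (- \<Phi> x) * (- a x) * (C0 q + Prim (Fq q) x) + (0 + Fq q x) * exp (- \<Phi> x)) (at x)"
    unfolding S0_fun using DERIV_mult[OF d1 d2] by (simp add: mult.commute)
  moreover have "exp (- \<Phi> x) * (- a x) * (C0 q + Prim (Fq q) x) + (0 + Fq q x) * exp (- \<Phi> x)
      = - a x * S0 q x + (hq q - q x)"
    unfolding S0_def Fq_def by (simp add: algebra_simps exp_minus)
  ultimately show ?thesis by (rule DERIV_cong)
qed

lemma w_deriv: "(w has_real_derivative (- a x * w x)) (at x)"
proof -
  have d1: "((\<lambda>x. exp (- \<Phi> x)) has_real_derivative exp (- \<Phi> x) * (- a x)) (at x)"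
    by (rule DERIV_chain2[OF DERIV_exp]) (rule DERIV_minus[OF \<Phi>_deriv])
  have "(w has_real_derivative exp (- \<Phi> x) * (- a x) / wden) (at x)"
    unfolding w_def[abs_def] using DERIV_cdivide[OF d1, of wden] by simp
  then show ?thesis by (rule DERIV_cong) (simp add: w_def)
qed

lemma S0_int:
  assumes "cp q"
  shows "integral {0..1} (S0 q) = 0"
proof -
  define IP where "IP = integral {0..1} (\<lambda>x. exp (- \<Phi> x) * Prim (Fq q) x)"
  have e: "S0 q = (\<lambda>x. C0 q * exp (- \<Phi> x) + exp (- \<Phi> x) * Prim (Fq q) x)"
    unfolding S0_fun by (simp add: algebra_simps)
  have c1: "continuous_on UNIV (\<lambda>x. C0 q * exp (- \<Phi> x))"
    using cpD(1)[OF cp_mult[OF cp_const cp_exp\<Phi>(2)]] .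
  have c2: "continuous_on UNIV (\<lambda>x. exp (- \<Phi> x) * Prim (Fq q) x)"
    using cpD(1)[OF cp_mult[OF cp_exp\<Phi>(2) PF_cp[OF assms]]] .
  have "integral {0..1} (S0 q) = integral {0..1} (\<lambda>x. C0 q * exp (- \<Phi> x)) + IP"
    unfolding e IP_def by (rule integral_add[OF int_cont[OF c1] int_cont[OF c2]])
  also have "\<dots> = C0 q * wden + IP" unfolding wden_def int_cmul ..
  also have "\<dots> = 0" unfolding C0_def IP_def using wden_pos by simp
  finally show ?thesis .
qed

lemma w_int: "integral {0..1} w = 1"
proof -
  have "integral {0..1} w = integral {0..1} (\<lambda>x. exp (- \<Phi> x)) * (1 / wden)"
    unfolding w_fun by (rule int_cmul2)
  then show ?thesis using wden_pos unfolding wden_def by simp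
qed

lemma w_pos: "0 < w x" unfolding w_def using wden_pos by simp

lemma w_bound: "\<bar>w x\<bar> \<le> ek * ek"
proof -
  have "\<bar>exp (- \<Phi> x)\<bar> \<le> ek" using exp\<Phi>_le(2)[of x] by simp
  from div_bound[OF ek_pos wden_ge this] show ?thesis unfolding w_def .
qed

lemma S0_bound:
  assumes "cp q" "\<And>s. \<bar>q s\<bar> \<le> \<beta>"
  shows "\<bar>S0 q x\<bar> \<le> Qc * \<beta>"
proof -
  have b0: "0 \<le> \<beta>" using assms(2)[of 0] by linarith
  have ek0: "0 \<le> ek" using ek_pos by simp
  have qe: "continuous_on UNIV (\<lambda>s. q s * exp (\<Phi> s))"
    using cpD(1)[OF cp_mult[OF assms(1) cp_exp\<Phi>(1)]] .
  have "\<bar>q s * exp (\<Phi> s)\<bar> \<le> \<beta> * ek" for s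
    unfolding abs_mult using assms(2)[of s] exp\<Phi>_le(1)[of s] b0
    by (simp add: mult_mono)
  then have "\<bar>integral {0..1} (\<lambda>s. q s * exp (\<Phi> s))\<bar> \<le> \<beta> * ek"
    using int_bound01[OF qe, of "\<beta> * ek" 1] by simp
  then have hb: "\<bar>hq q\<bar> \<le> \<beta> * ek * ek"
    unfolding hq_def by (rule div_bound[OF ek_pos pden_ge])
  define B1 where "B1 = (\<beta> * ek * ek + \<beta>) * ek"
  have B1: "0 \<le> B1" unfolding B1_def using b0 ek0 by simp
  have Fb: "\<bar>Fq q s\<bar> \<le> B1" for s
  proof -
    have "\<bar>hq q - q s\<bar> \<le> \<beta> * ek * ek + \<beta>" using hb assms(2)[of s] by linarith
    then show ?thesis unfolding Fq_def B1_def abs_mult using exp\<Phi>_le(1)[of s] b0 ek0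
      by (simp add: mult_mono)
  qed
  have Pb: "\<bar>Prim (Fq q) y\<bar> \<le> B1" if "y \<in> {0..1}" for y
    by (rule Prim_bound01[OF cpD(1)[OF Fq_cp[OF assms(1)]] Fb that])
  have ePc: "continuous_on UNIV (\<lambda>x. exp (- \<Phi> x) * Prim (Fq q) x)"
    using cpD(1)[OF cp_mult[OF cp_exp\<Phi>(2) PF_cp[OF assms(1)]]] .
  have "\<bar>exp (- \<Phi> y) * Prim (Fq q) y\<bar> \<le> ek * B1" if "y \<in> {0..1}" for y
    unfolding abs_mult using exp\<Phi>_le(2)[of y] Pb[OF that] ek0 by (simp add: mult_mono)
  then have "\<bar>integral {0..1} (\<lambda>x. exp (- \<Phi> x) * Prim (Fq q) x)\<bar> \<le> ek * B1"
    using int_bound01[OF ePc, of "ek * B1" 1] by simp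
  then have Cb: "\<bar>C0 q\<bar> \<le> ek * B1 * ek"
    unfolding C0_def using div_bound[OF ek_pos wden_ge] by (simp only: minus_divide_left abs_minus_cancel)
  have main: "\<bar>S0 q y\<bar> \<le> Qc * \<beta>" if "y \<in> {0..1}" for y
  proof -
    have "\<bar>C0 q + Prim (Fq q) y\<bar> \<le> ek * B1 * ek + B1" using Cb Pb[OF that] by linarith
    then have "\<bar>S0 q y\<bar> \<le> ek * (ek * B1 * ek + B1)"
      unfolding S0_def abs_mult using exp\<Phi>_le(2)[of y] ek0 B1 by (simp add: mult_mono)
    also have "\<dots> = Qc * \<beta>" unfolding Qc_def B1_def by (simp add: algebra_simps)
    finally show ?thesis .
  qed
  show ?thesis
    by (rule per_all[of "S0 q" "\<lambda>v. \<bar>v\<bar> \<le> Qc * \<beta>"]) (use cpD(2)[OF S0_cp[OF assms(1)]] main in auto)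
qed

lemma Qc_pos: "0 < Qc" unfolding Qc_def using ek_pos by (intro mult_pos_pos add_pos_pos) auto

lemma S0_diff:
  assumes "cp q1" "cp q2"
  shows "S0 (\<lambda>s. q1 s - q2 s) x = S0 q1 x - S0 q2 x"
proof -
  have i: "continuous_on UNIV (\<lambda>s. q s * exp (\<Phi> s))" if "cp q" for q
    using cpD(1)[OF cp_mult[OF that cp_exp\<Phi>(1)]] .
  have h: "hq (\<lambda>s. q1 s - q2 s) = hq q1 - hq q2"
  proof -
    have "integral {0..1} (\<lambda>s. (q1 s - q2 s) * exp (\<Phi> s))
        = integral {0..1} (\<lambda>s. q1 s * exp (\<Phi> s) - q2 s * exp (\<Phi> s))"
      by (simp add: algebra_simps)
    also have "\<dots> = integral {0..1} (\<lambda>s. q1 s * exp (\<Phi> s)) - integral {0..1} (\<lambda>s. q2 s * exp (\<Phi> s))"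
      by (rule integral_diff[OF int_cont[OF i[OF assms(1)]] int_cont[OF i[OF assms(2)]]])
    finally show ?thesis unfolding hq_def by (simp add: diff_divide_distrib)
  qed
  have F: "Fq (\<lambda>s. q1 s - q2 s) = (\<lambda>s. Fq q1 s - Fq q2 s)"
    unfolding Fq_fun h by (rule ext) (simp add: algebra_simps)
  have P: "Prim (Fq (\<lambda>s. q1 s - q2 s)) = (\<lambda>y. Prim (Fq q1) y - Prim (Fq q2) y)"
    unfolding F by (rule ext) (rule Prim_diff[OF cpD(1)[OF Fq_cp[OF assms(1)]] cpD(1)[OF Fq_cp[OF assms(2)]]])
  have j: "continuous_on UNIV (\<lambda>x. exp (- \<Phi> x) * Prim (Fq q) x)" if "cp q" for q
    using cpD(1)[OF cp_mult[OF cp_exp\<Phi>(2) PF_cp[OF that]]] .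
  have C: "C0 (\<lambda>s. q1 s - q2 s) = C0 q1 - C0 q2"
  proof -
    have "integral {0..1} (\<lambda>x. exp (- \<Phi> x) * (Prim (Fq q1) x - Prim (Fq q2) x))
        = integral {0..1} (\<lambda>x. exp (- \<Phi> x) * Prim (Fq q1) x - exp (- \<Phi> x) * Prim (Fq q2) x)"
      by (simp add: algebra_simps)
    also have "\<dots> = integral {0..1} (\<lambda>x. exp (- \<Phi> x) * Prim (Fq q1) x) - integral {0..1} (\<lambda>x. exp (- \<Phi> x) * Prim (Fq q2) x)"
      by (rule integral_diff[OF int_cont[OF j[OF assms(1)]] int_cont[OF j[OF assms(2)]]])
    finally show ?thesis unfolding C0_def P by (simp add: diff_divide_distrib)
  qed
  show ?thesis unfolding S0_def C P by (simp add: algebra_simps)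
qed


definition M2 :: real where "M2 = max 1 (Sup ((\<lambda>p. \<bar>G'' p\<bar>) ` {p1 - 1..p2 + 1}))"

lemma M2_bound: "p \<in> {p1 - 1..p2 + 1} \<Longrightarrow> \<bar>G'' p\<bar> \<le> M2"
proof -
  assume p: "p \<in> {p1 - 1..p2 + 1}"
  have "\<bar>G'' p\<bar> \<le> Sup ((\<lambda>p. \<bar>G'' p\<bar>) ` {p1 - 1..p2 + 1})"
    by (rule cSUP_upper[OF p]) (auto intro!: bounded_imp_bdd_above compact_imp_bounded compact_continuous_image
      continuous_on_subset[OF absG''_cont])
  then show ?thesis unfolding M2_def by linarith
qed

lemma M2_ge1: "1 \<le> M2" unfolding M2_def by simp

lemma G'_lip:
  assumes "\<bar>t\<bar> \<le> 1"
  shows "\<bar>G' (f s + t) - G' (f s)\<bar> \<le> M2 * \<bar>t\<bar>"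
proof -
  have "\<bar>G' (f s + t) - G' (f s)\<bar> \<le> M2 * \<bar>(f s + t) - f s\<bar>"
  proof (rule lip_bound[of "f s - 1" "f s + 1" G' G''])
    show "(G' has_real_derivative G'' t) (at t)" for t by (rule G'_deriv)
    show "\<bar>G'' u\<bar> \<le> M2" if "u \<in> {f s - 1..f s + 1}" for u
      using that f_bounds[of s] by (intro M2_bound) auto
    show "f s + t \<in> {f s - 1..f s + 1}" using assms by (simp add: abs_le_iff)
    show "f s \<in> {f s - 1..f s + 1}" by simp
  qed
  then show ?thesis by simp
qed

definition N :: "real \<Rightarrow> real \<Rightarrow> real" where
  "N s u = G (f s + u) - G (f s) - a s * u"

lemma N_0: "N s 0 = 0" unfolding N_def by simp

lemma N_lip:
  assumes "\<rho> \<le> 1" "\<bar>u\<bar> \<le> \<rho>" "\<bar>v\<bar> \<le> \<rho>"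
  shows "\<bar>N s u - N s v\<bar> \<le> M2 * \<rho> * \<bar>u - v\<bar>"
proof -
  define \<phi> where "\<phi> t = G (f s + t) - a s * t" for t
  have e: "N s u - N s v = \<phi> u - \<phi> v" unfolding N_def \<phi>_def by simp
  have "\<bar>\<phi> u - \<phi> v\<bar> \<le> (M2 * \<rho>) * \<bar>u - v\<bar>"
  proof (rule lip_bound[of "-\<rho>" \<rho> \<phi> "\<lambda>t. G' (f s + t) - a s"])
    show "(\<phi> has_real_derivative G' (f s + t) - a s) (at t)" for t
    proof -
      have "((\<lambda>t. G (f s + t)) has_real_derivative G' (f s + t) * (0 + 1)) (at t)"
        by (rule DERIV_chain2[OF G_deriv]) (intro derivative_intros)
      then have "(\<phi> has_real_derivative G' (f s + t) * (0 + 1) - a s * 1) (at t)"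
        unfolding \<phi>_def[abs_def] by (rule DERIV_diff[OF _ DERIV_cmult[OF DERIV_ident]])
      then show ?thesis by simp
    qed
    show "\<bar>G' (f s + t) - a s\<bar> \<le> M2 * \<rho>" if "t \<in> {-\<rho>..\<rho>}" for t
    proof -
      have t1: "\<bar>t\<bar> \<le> 1" using that assms(1) by (simp add: abs_le_iff)
      have "\<bar>G' (f s + t) - a s\<bar> \<le> M2 * \<bar>t\<bar>" unfolding a_def by (rule G'_lip[OF t1])
      also have "\<dots> \<le> M2 * \<rho>" using that M2_ge1 by (intro mult_left_mono) (auto simp: abs_le_iff)
      finally show ?thesis .
    qed
    show "u \<in> {-\<rho>..\<rho>}" "v \<in> {-\<rho>..\<rho>}" using assms by (auto simp: abs_le_iff)
  qed
  then show ?thesis unfolding e .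
qed

lemma N_bound:
  assumes "\<rho> \<le> 1" "\<bar>u\<bar> \<le> \<rho>"
  shows "\<bar>N s u\<bar> \<le> M2 * \<rho> * \<bar>u\<bar>"
  using N_lip[OF assms(1,2), of 0 s] assms(2) by (simp add: N_0)

lemma N_cp:
  assumes "cp d"
  shows "cp (\<lambda>s. N s (d s))"
proof -
  have c1: "continuous_on UNIV (\<lambda>s. f s + d s)"
    by (intro continuous_on_add f_cont cpD(1)[OF assms])
  have "continuous_on UNIV (\<lambda>s. G (f s + d s) - G (f s) - a s * d s)"
    by (intro continuous_on_diff continuous_on_mult continuous_on_compose2[OF G_cont c1]
        continuous_on_compose2[OF G_cont f_cont] a_cont cpD(1)[OF assms]) auto
  moreover have "N (s + 1) (d (s + 1)) = N s (d s)" for s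
    unfolding N_def using f_per[of s] cpD(2)[OF assms, of s] cpD(2)[OF a_cp, of s] by simp
  ultimately show ?thesis unfolding cp_def N_def by simp
qed

definition SP :: "real \<Rightarrow> (real \<Rightarrow>\<^sub>C real) set" where
  "SP \<rho> = {d. (\<forall>x. apply_bcontfun d (x + 1) = apply_bcontfun d x) \<and> norm d \<le> \<rho>}"

lemma eval_cont: "continuous_on UNIV (\<lambda>d::real \<Rightarrow>\<^sub>C real. apply_bcontfun d x)"
proof -
  have "1-lipschitz_on UNIV (\<lambda>d::real \<Rightarrow>\<^sub>C real. apply_bcontfun d x)"
    by (rule lipschitz_onI) (simp_all add: dist_bounded)
  then show ?thesis by (rule lipschitz_on_continuous_on)
qed

lemma SP_closed: "closed (SP \<rho>)"
proof -
  have "SP \<rho> = {d. norm d \<le> \<rho>} \<inter> (\<Inter>x. {d. apply_bcontfun d (x + 1) = apply_bcontfun d x})"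
    unfolding SP_def by auto
  moreover have "closed {d::real \<Rightarrow>\<^sub>C real. norm d \<le> \<rho>}"
    by (rule closed_Collect_le[OF continuous_on_norm_id continuous_on_const])
  moreover have "closed {d::real \<Rightarrow>\<^sub>C real. apply_bcontfun d (x + 1) = apply_bcontfun d x}" for x
    by (rule closed_Collect_eq[OF eval_cont eval_cont])
  ultimately show ?thesis by (simp add: closed_Int closed_INT)
qed

lemma SP_cp: "d \<in> SP \<rho> \<Longrightarrow> cp (apply_bcontfun d)"
  unfolding SP_def cp_def by auto

lemma SP_bound: "d \<in> SP \<rho> \<Longrightarrow> \<bar>apply_bcontfun d x\<bar> \<le> \<rho>"
  unfolding SP_def using norm_bounded[of d x] by auto

definition Tf :: "real \<Rightarrow> (real \<Rightarrow> real) \<Rightarrow> real \<Rightarrow> real" where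
  "Tf c d x = c * w x + S0 (\<lambda>s. N s (d s)) x"

definition Tm :: "real \<Rightarrow> (real \<Rightarrow>\<^sub>C real) \<Rightarrow> (real \<Rightarrow>\<^sub>C real)" where
  "Tm c d = Bcontfun (Tf c (apply_bcontfun d))"

lemma Tf_cp: "cp d \<Longrightarrow> cp (Tf c d)"
proof -
  assume d: "cp d"
  have "Tf c d = (\<lambda>x. c * w x + S0 (\<lambda>s. N s (d s)) x)" by (rule ext) (simp add: Tf_def)
  then show ?thesis by (simp add: cp_add cp_mult cp_const w_cp S0_cp N_cp d)
qed

lemma Tm_apply:
  assumes "cp (apply_bcontfun d)"
  shows "apply_bcontfun (Tm c d) = Tf c (apply_bcontfun d)"
proof -
  have cp: "cp (Tf c (apply_bcontfun d))" by (rule Tf_cp[OF assms])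
  obtain B where "\<And>x. \<bar>Tf c (apply_bcontfun d) x\<bar> \<le> B" using cp_bounded[OF cp] by blast
  then have "Tf c (apply_bcontfun d) \<in> bcontfun"
    by (intro bcontfun_normI[OF cpD(1)[OF cp]]) simp
  then show ?thesis unfolding Tm_def by (rule Bcontfun_inverse)
qed

definition \<rho>0 :: real where "\<rho>0 = min 1 (1 / (2 * Qc * M2))"
definition c0 :: real where "c0 = \<rho>0 / (2 * ek * ek)"

lemma \<rho>0_pos: "0 < \<rho>0" unfolding \<rho>0_def using Qc_pos M2_ge1 by simp
lemma \<rho>0_le1: "\<rho>0 \<le> 1" unfolding \<rho>0_def by simp
lemma \<rho>0_contr: "Qc * M2 * \<rho>0 \<le> 1 / 2"
proof -
  have "\<rho>0 \<le> 1 / (2 * Qc * M2)" unfolding \<rho>0_def by simp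
  then have "Qc * M2 * \<rho>0 \<le> Qc * M2 * (1 / (2 * Qc * M2))"
    using Qc_pos M2_ge1 by (intro mult_left_mono) auto
  also have "\<dots> = 1 / 2" using Qc_pos M2_ge1 by simp
  finally show ?thesis .
qed
lemma c0_pos: "0 < c0" unfolding c0_def using \<rho>0_pos ek_pos by simp

lemma S0N_bound:
  assumes "cp d" "\<delta> \<le> 1" "\<And>s. \<bar>d s\<bar> \<le> \<delta>"
  shows "\<bar>S0 (\<lambda>s. N s (d s)) x\<bar> \<le> Qc * (M2 * \<delta> * \<delta>)"
proof (rule S0_bound[OF N_cp[OF assms(1)]])
  fix s
  have "\<bar>N s (d s)\<bar> \<le> M2 * \<delta> * \<bar>d s\<bar>" by (rule N_bound[OF assms(2,3)])
  also have "\<dots> \<le> M2 * \<delta> * \<delta>"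
    using assms(3)[of s] M2_ge1 abs_ge_zero[of "d s"] by (intro mult_left_mono) auto
  finally show "\<bar>N s (d s)\<bar> \<le> M2 * \<delta> * \<delta>" .
qed

lemma Tm_maps:
  assumes c: "\<bar>c\<bar> \<le> c0" and d: "d \<in> SP \<rho>0"
  shows "Tm c d \<in> SP \<rho>0"
proof -
  have cpd: "cp (apply_bcontfun d)" by (rule SP_cp[OF d])
  have ap: "apply_bcontfun (Tm c d) = Tf c (apply_bcontfun d)" by (rule Tm_apply[OF cpd])
  have bx: "\<bar>Tf c (apply_bcontfun d) x\<bar> \<le> \<rho>0" for x
  proof -
    have "\<bar>c * w x\<bar> \<le> c0 * (ek * ek)"
      unfolding abs_mult using c w_bound[of x] by (intro mult_mono) auto
    also have "\<dots> = \<rho>0 / 2" unfolding c0_def using ek_pos by simp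
    finally have 1: "\<bar>c * w x\<bar> \<le> \<rho>0 / 2" .
    have "\<bar>S0 (\<lambda>s. N s (apply_bcontfun d s)) x\<bar> \<le> Qc * (M2 * \<rho>0 * \<rho>0)"
      by (rule S0N_bound[OF cpd \<rho>0_le1 SP_bound[OF d]])
    also have "\<dots> = (Qc * M2 * \<rho>0) * \<rho>0" by simp
    also have "\<dots> \<le> (1 / 2) * \<rho>0" using \<rho>0_contr \<rho>0_pos by (intro mult_right_mono) auto
    finally have 2: "\<bar>S0 (\<lambda>s. N s (apply_bcontfun d s)) x\<bar> \<le> \<rho>0 / 2" by simp
    show ?thesis unfolding Tf_def using 1 2 by linarith
  qed
  have "norm (Tm c d) \<le> \<rho>0"
    by (rule norm_bound) (use ap bx in simp)
  moreover have "apply_bcontfun (Tm c d) (x + 1) = apply_bcontfun (Tm c d) x" for x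
    unfolding ap by (rule cpD(2)[OF Tf_cp[OF cpd]])
  ultimately show ?thesis unfolding SP_def by blast
qed

lemma Tm_contr:
  assumes d1: "d1 \<in> SP \<rho>0" and d2: "d2 \<in> SP \<rho>0"
  shows "dist (Tm c d1) (Tm c d2) \<le> 1 / 2 * dist d1 d2"
proof -
  have cp1: "cp (apply_bcontfun d1)" by (rule SP_cp[OF d1])
  have cp2: "cp (apply_bcontfun d2)" by (rule SP_cp[OF d2])
  define q1 where "q1 = (\<lambda>s. N s (apply_bcontfun d1 s))"
  define q2 where "q2 = (\<lambda>s. N s (apply_bcontfun d2 s))"
  have cq1: "cp q1" unfolding q1_def by (rule N_cp[OF cp1])
  have cq2: "cp q2" unfolding q2_def by (rule N_cp[OF cp2])
  have qb: "\<bar>q1 s - q2 s\<bar> \<le> M2 * \<rho>0 * dist d1 d2" for s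
  proof -
    have "\<bar>q1 s - q2 s\<bar> \<le> M2 * \<rho>0 * \<bar>apply_bcontfun d1 s - apply_bcontfun d2 s\<bar>"
      unfolding q1_def q2_def by (rule N_lip[OF \<rho>0_le1 SP_bound[OF d1] SP_bound[OF d2]])
    also have "\<dots> \<le> M2 * \<rho>0 * dist d1 d2"
      using dist_bounded[of d1 s d2] M2_ge1 \<rho>0_pos by (intro mult_left_mono) (auto simp: dist_real_def)
    finally show ?thesis .
  qed
  have "\<bar>apply_bcontfun (Tm c d1) x - apply_bcontfun (Tm c d2) x\<bar> \<le> 1 / 2 * dist d1 d2" for x
  proof -
    have "apply_bcontfun (Tm c d1) x - apply_bcontfun (Tm c d2) x = S0 q1 x - S0 q2 x"
      unfolding Tm_apply[OF cp1] Tm_apply[OF cp2] Tf_def q1_def q2_def by simp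
    also have "\<dots> = S0 (\<lambda>s. q1 s - q2 s) x" by (rule S0_diff[OF cq1 cq2, symmetric])
    finally have e: "apply_bcontfun (Tm c d1) x - apply_bcontfun (Tm c d2) x = S0 (\<lambda>s. q1 s - q2 s) x" .
    have "\<bar>S0 (\<lambda>s. q1 s - q2 s) x\<bar> \<le> Qc * (M2 * \<rho>0 * dist d1 d2)"
      by (rule S0_bound[OF cp_diff[OF cq1 cq2] qb])
    also have "\<dots> = (Qc * M2 * \<rho>0) * dist d1 d2" by simp
    also have "\<dots> \<le> 1 / 2 * dist d1 d2" using \<rho>0_contr by (intro mult_right_mono) auto
    finally show ?thesis unfolding e .
  qed
  then have "norm (Tm c d1 - Tm c d2) \<le> 1 / 2 * dist d1 d2"
    by (intro norm_bound) simp
  then show ?thesis by (simp add: dist_norm)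
qed

lemma fixp:
  assumes "\<bar>c\<bar> \<le> c0"
  shows "\<exists>d \<in> SP \<rho>0. Tm c d = d"
proof -
  have "complete (SP \<rho>0)" by (simp add: complete_eq_closed SP_closed)
  moreover have "SP \<rho>0 \<noteq> {}"
  proof -
    have "(0 :: real \<Rightarrow>\<^sub>C real) \<in> SP \<rho>0" unfolding SP_def using \<rho>0_pos by simp
    then show ?thesis by blast
  qed
  moreover have "Tm c ` SP \<rho>0 \<subseteq> SP \<rho>0" using Tm_maps[OF assms] by blast
  ultimately have "\<exists>!x\<in>SP \<rho>0. Tm c x = x"
    by (intro Banach_fix[of "SP \<rho>0" "1/2" "Tm c"] Tm_contr) auto
  then show ?thesis by blast
qed

lemma sol_exists:
  assumes c: "\<bar>c\<bar> \<le> c0"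
  shows "\<exists>d. cp d \<and> (\<forall>x. d x = Tf c d x) \<and> (\<forall>x. \<bar>d x\<bar> \<le> 2 * \<bar>c\<bar> * (ek * ek))
            \<and> (\<forall>x. \<bar>d x - c * w x\<bar> \<le> Qc * M2 * (2 * \<bar>c\<bar> * (ek * ek))^2)"
proof -
  obtain D where D: "D \<in> SP \<rho>0" "Tm c D = D" using fixp[OF c] by blast
  define d where "d = apply_bcontfun D"
  have cpd: "cp d" unfolding d_def by (rule SP_cp[OF D(1)])
  have fx: "d x = Tf c d x" for x
    using Tm_apply[OF cpd[unfolded d_def], of c] D(2) unfolding d_def by simp
  define \<delta> where "\<delta> = norm D"
  have \<delta>: "\<delta> \<le> \<rho>0" using D(1) unfolding SP_def \<delta>_def by simp
  have \<delta>0: "0 \<le> \<delta>" unfolding \<delta>_def by simp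
  have db: "\<bar>d s\<bar> \<le> \<delta>" for s unfolding d_def \<delta>_def using norm_bounded[of D s] by simp
  have Sb: "\<bar>S0 (\<lambda>s. N s (d s)) x\<bar> \<le> Qc * (M2 * \<delta> * \<delta>)" for x
    by (rule S0N_bound[OF cpd _ db]) (use \<delta> \<rho>0_le1 in linarith)
  have Sb2: "\<bar>S0 (\<lambda>s. N s (d s)) x\<bar> \<le> \<delta> / 2" for x
  proof -
    have "Qc * (M2 * \<delta> * \<delta>) = (Qc * M2 * \<delta>) * \<delta>" by simp
    also have "\<dots> \<le> (Qc * M2 * \<rho>0) * \<delta>"
      using \<delta> \<delta>0 Qc_pos M2_ge1 by (intro mult_right_mono mult_left_mono) auto
    also have "\<dots> \<le> (1/2) * \<delta>" using \<rho>0_contr \<delta>0 by (intro mult_right_mono) auto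
    finally show ?thesis using Sb[of x] by simp
  qed
  have wb: "\<bar>c * w x\<bar> \<le> \<bar>c\<bar> * (ek * ek)" for x
    unfolding abs_mult using w_bound[of x] by (intro mult_left_mono) auto
  have "\<bar>d x\<bar> \<le> \<bar>c\<bar> * (ek * ek) + \<delta> / 2" for x
    using fx[of x] Sb2[of x] wb[of x] unfolding Tf_def by linarith
  then have "norm D \<le> \<bar>c\<bar> * (ek * ek) + \<delta> / 2"
    by (intro norm_bound) (simp add: d_def)
  then have \<delta>b: "\<delta> \<le> 2 * \<bar>c\<bar> * (ek * ek)" unfolding \<delta>_def by simp
  have r1: "\<bar>d x\<bar> \<le> 2 * \<bar>c\<bar> * (ek * ek)" for x using db[of x] \<delta>b by linarith
  have r2: "\<bar>d x - c * w x\<bar> \<le> Qc * M2 * (2 * \<bar>c\<bar> * (ek * ek))^2" for x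
  proof -
    have "\<bar>d x - c * w x\<bar> \<le> Qc * (M2 * \<delta> * \<delta>)"
      using fx[of x] Sb[of x] unfolding Tf_def by simp
    also have "\<dots> = Qc * M2 * (\<delta> * \<delta>)" by simp
    also have "\<dots> \<le> Qc * M2 * (2 * \<bar>c\<bar> * (ek * ek))^2"
    proof -
      have "\<delta> * \<delta> \<le> (2 * \<bar>c\<bar> * (ek * ek)) * (2 * \<bar>c\<bar> * (ek * ek))"
        by (rule mult_mono[OF \<delta>b \<delta>b]) (use \<delta>0 \<delta>b in linarith)+
      then have "\<delta> * \<delta> \<le> (2 * \<bar>c\<bar> * (ek * ek))^2" by (simp only: power2_eq_square)
      then show ?thesis using Qc_pos M2_ge1 by (intro mult_left_mono) auto
    qed
    finally show ?thesis .
  qed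
  show ?thesis using cpd fx r1 r2 by blast
qed

end


lemma H_le:
  fixes g1 g2 g1' g2' G V :: "real \<Rightarrow> real"
  assumes d1: "\<And>x. (g1 has_real_derivative g1' x) (at x)"
    and d2: "\<And>x. (g2 has_real_derivative g2' x) (at x)"
    and p1: "\<And>x. g1 (x + 1) = g1 x" and p2: "\<And>x. g2 (x + 1) = g2 x"
    and int: "integral {0..1} g1 = integral {0..1} g2"
    and e1: "\<And>x. g1' x + G (g1 x) + V x = H1"
    and e2: "\<And>x. g2' x + G (g2 x) + V x = H2"
  shows "H1 \<le> H2"
proof (rule ccontr)
  assume "\<not> H1 \<le> H2"
  then have H: "0 < H1 - H2" by simp
  define D where "D x = g1 x - g2 x" for x
  have c1: "continuous_on UNIV g1" by (rule deriv_cont[OF d1])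
  have c2: "continuous_on UNIV g2" by (rule deriv_cont[OF d2])
  have Dc: "continuous_on UNIV D" unfolding D_def[abs_def] by (intro continuous_on_diff c1 c2)
  have Dp: "D (x + 1) = D x" for x unfolding D_def using p1 p2 by simp
  have Dd: "(D has_real_derivative g1' x - g2' x) (at x)" for x
    unfolding D_def[abs_def] by (rule DERIV_diff[OF d1 d2])
  have Di: "integral {0..1} D = 0"
    unfolding D_def[abs_def] using integral_diff[OF int_cont[OF c1] int_cont[OF c2]] int by simp
  define P where "P = Prim D"
  have Pd: "(P has_real_derivative D x) (at x)" for x unfolding P_def by (rule Prim_deriv[OF Dc])
  have Pc: "continuous_on UNIV P" by (rule deriv_cont[OF Pd])
  have Pp: "P (x + 1) = P x" for x unfolding P_def using Prim_per[OF Dc Dp] Di by simp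
  obtain x0 where x0: "x0 \<in> {0..1}" "\<And>y. y \<in> {0..1} \<Longrightarrow> P y \<le> P x0"
    using continuous_attains_sup[OF compact_Icc _ continuous_on_subset[OF Pc subset_UNIV], of 0 1] by auto
  have mx: "P y \<le> P x0" for y
    by (rule per_all[of P "\<lambda>v. v \<le> P x0"]) (use Pp x0 in auto)
  have D0: "D x0 = 0"
    by (rule DERIV_local_max[OF Pd zero_less_one]) (use mx in auto)
  have eq: "g1 x0 = g2 x0" using D0 unfolding D_def by simp
  have "G (g1 x0) = G (g2 x0)" using eq by simp
  then have "g1' x0 - g2' x0 = H1 - H2" using e1[of x0] e2[of x0] by linarith
  then have "0 < g1' x0 - g2' x0" using H by simp
  from DERIV_pos_inc_right[OF Dd this] obtain \<delta> where \<delta>: "\<delta> > 0" "\<And>h. h > 0 \<Longrightarrow> h < \<delta> \<Longrightarrow> D x0 < D (x0 + h)"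
    by blast
  have "\<exists>z. x0 < z \<and> z < x0 + \<delta> / 2 \<and> P (x0 + \<delta> / 2) - P x0 = (x0 + \<delta> / 2 - x0) * D z"
    by (rule MVT2) (use \<delta> Pd in auto)
  then obtain z where z: "x0 < z" "z < x0 + \<delta> / 2" "P (x0 + \<delta> / 2) - P x0 = (\<delta> / 2) * D z" by auto
  have "D x0 < D (x0 + (z - x0))" using z \<delta> by (intro \<delta>(2)) auto
  then have "0 < D z" using D0 by simp
  then have "0 < (\<delta> / 2) * D z" using \<delta>(1) by simp
  then have "P x0 < P (x0 + \<delta> / 2)" using z(3) by linarith
  then show False using mx[of "x0 + \<delta> / 2"] by simp
qed

lemma gronwall0:
  fixes D D' :: "real \<Rightarrow> real"
  assumes Dd: "\<And>x. (D has_real_derivative D' x) (at x)"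
    and lip: "\<And>x. \<bar>D' x\<bar> \<le> M * \<bar>D x\<bar>"
    and M: "0 \<le> M"
    and z: "D x0 = 0"
  shows "D x = 0"
proof -
  have key: "\<bar>D x * D' x\<bar> \<le> M * (D x * D x)" for x
  proof -
    have "\<bar>D x * D' x\<bar> = \<bar>D x\<bar> * \<bar>D' x\<bar>" by (simp add: abs_mult)
    also have "\<dots> \<le> \<bar>D x\<bar> * (M * \<bar>D x\<bar>)" by (rule mult_left_mono[OF lip abs_ge_zero])
    also have "\<dots> = M * (D x * D x)" by (simp add: abs_mult[symmetric] algebra_simps)
    finally show ?thesis .
  qed
  have ud: "((\<lambda>x. D x * D x * exp (k * x)) has_real_derivative
      exp (k * x) * (2 * (D x * D' x) + k * (D x * D x))) (at x)" for k x
    using DERIV_mult[OF DERIV_mult[OF Dd Dd] DERIV_chain2[OF DERIV_exp DERIV_cmult[OF DERIV_ident]]]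
    by (rule DERIV_cong) (simp add: algebra_simps)
  show ?thesis
  proof (cases "x0 \<le> x")
    case True
    have "D x * D x * exp (- (2 * M) * x) \<le> D x0 * D x0 * exp (- (2 * M) * x0)"
    proof (rule DERIV_nonpos_imp_nonincreasing[OF True])
      fix t
      have "exp (- (2 * M) * t) * (2 * (D t * D' t) + - (2 * M) * (D t * D t)) \<le> 0"
        using key[of t] by (intro mult_nonneg_nonpos) (auto simp: abs_le_iff)
      then show "\<exists>y. ((\<lambda>x. D x * D x * exp (- (2 * M) * x)) has_real_derivative y) (at t) \<and> y \<le> 0"
        using ud by blast
    qed
    then have "D x * D x * exp (- (2 * M) * x) \<le> 0" using z by simp
    moreover have "0 \<le> D x * D x * exp (- (2 * M) * x)" by simp
    ultimately have "D x * D x * exp (- (2 * M) * x) = 0" by linarith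
    then show ?thesis by simp
  next
    case False
    then have le: "x \<le> x0" by simp
    have "D x * D x * exp ((2 * M) * x) \<le> D x0 * D x0 * exp ((2 * M) * x0)"
    proof (rule DERIV_nonneg_imp_nondecreasing[OF le])
      fix t
      have "0 \<le> exp ((2 * M) * t) * (2 * (D t * D' t) + (2 * M) * (D t * D t))"
        using key[of t] by (intro mult_nonneg_nonneg) (auto simp: abs_le_iff)
      then show "\<exists>y. ((\<lambda>x. D x * D x * exp ((2 * M) * x)) has_real_derivative y) (at t) \<and> y \<ge> 0"
        using ud by blast
    qed
    then have "D x * D x * exp ((2 * M) * x) \<le> 0" using z by simp
    moreover have "0 \<le> D x * D x * exp ((2 * M) * x)" by simp
    ultimately have "D x * D x * exp ((2 * M) * x) = 0" by linarith
    then show ?thesis by simp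
  qed
qed

lemma zero_exists:
  assumes "cp D" "integral {0..1} D = 0"
  shows "\<exists>x0. D x0 = 0"
proof -
  have Dc: "continuous_on UNIV D" by (rule cpD(1)[OF assms(1)])
  have Dp: "D (x + 1) = D x" for x by (rule cpD(2)[OF assms(1)])
  define P where "P = Prim D"
  have Pd: "(P has_real_derivative D x) (at x)" for x unfolding P_def by (rule Prim_deriv[OF Dc])
  have Pc: "continuous_on UNIV P" by (rule deriv_cont[OF Pd])
  have Pp: "P (x + 1) = P x" for x unfolding P_def using Prim_per[OF Dc Dp] assms(2) by simp
  obtain x0 where x0: "x0 \<in> {0..1}" "\<And>y. y \<in> {0..1} \<Longrightarrow> P y \<le> P x0"
    using continuous_attains_sup[OF compact_Icc _ continuous_on_subset[OF Pc subset_UNIV], of 0 1] by auto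
  have mx: "P y \<le> P x0" for y
    by (rule per_all[of P "\<lambda>v. v \<le> P x0"]) (use Pp x0 in auto)
  have "D x0 = 0"
    by (rule DERIV_local_max[OF Pd zero_less_one]) (use mx in auto)
  then show ?thesis by blast
qed

lemma per_sol_unique:
  fixes G G' V g1 g2 :: "real \<Rightarrow> real"
  assumes G_deriv: "\<And>x. (G has_real_derivative G' x) (at x)" and G'c: "continuous_on UNIV G'"
    and s1: "per_sol G V \<theta> g1" and s2: "per_sol G V \<theta> g2"
  shows "g1 = g2"
proof -
  obtain g1' H1 where d1: "\<And>x. (g1 has_real_derivative g1' x) (at x)" and e1: "\<And>x. g1' x + G (g1 x) + V x = H1"
    and p1: "\<And>x. g1 (x + 1) = g1 x" and i1: "integral {0..1} g1 = \<theta>"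
    using s1 unfolding per_sol_def by blast
  obtain g2' H2 where d2: "\<And>x. (g2 has_real_derivative g2' x) (at x)" and e2: "\<And>x. g2' x + G (g2 x) + V x = H2"
    and p2: "\<And>x. g2 (x + 1) = g2 x" and i2: "integral {0..1} g2 = \<theta>"
    using s2 unfolding per_sol_def by blast
  have "H1 \<le> H2" by (rule H_le[OF d1 d2 p1 p2 _ e1 e2]) (simp add: i1 i2)
  moreover have "H2 \<le> H1" by (rule H_le[OF d2 d1 p2 p1 _ e2 e1]) (simp add: i1 i2)
  ultimately have H: "H1 = H2" by simp
  have c1: "continuous_on UNIV g1" by (rule deriv_cont[OF d1])
  have c2: "continuous_on UNIV g2" by (rule deriv_cont[OF d2])
  have cp1: "cp g1" unfolding cp_def using c1 p1 by blast
  have cp2: "cp g2" unfolding cp_def using c2 p2 by blast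
  define D where "D x = g1 x - g2 x" for x
  have cpD: "cp D" unfolding D_def[abs_def] cp_def using c1 c2 p1 p2 by (auto intro!: continuous_on_diff)
  have Di: "integral {0..1} D = 0"
    unfolding D_def[abs_def] using integral_diff[OF int_cont[OF c1] int_cont[OF c2]] i1 i2 by simp
  obtain x0 where x0: "D x0 = 0" using zero_exists[OF cpD Di] by blast
  have Dd: "(D has_real_derivative g1' x - g2' x) (at x)" for x
    unfolding D_def[abs_def] by (rule DERIV_diff[OF d1 d2])
  obtain B1 where B1: "\<And>x. \<bar>g1 x\<bar> \<le> B1" using cp_bounded[OF cp1] by blast
  obtain B2 where B2: "\<And>x. \<bar>g2 x\<bar> \<le> B2" using cp_bounded[OF cp2] by blast
  define B where "B = max B1 B2"
  have "compact (G' ` {-B..B})"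
    by (intro compact_continuous_image continuous_on_subset[OF G'c subset_UNIV] compact_Icc)
  then have "bounded (G' ` {-B..B})" by (rule compact_imp_bounded)
  then obtain M where M: "M > 0" "\<forall>y \<in> G' ` {-B..B}. norm y \<le> M"
    unfolding bounded_pos by blast
  have lip: "\<bar>(g1' x - g2' x)\<bar> \<le> M * \<bar>D x\<bar>" for x
  proof -
    have "g1' x - g2' x = - (G (g1 x) - G (g2 x))" using e1[of x] e2[of x] H by linarith
    moreover have "\<bar>G (g1 x) - G (g2 x)\<bar> \<le> M * \<bar>g1 x - g2 x\<bar>"
    proof (rule lip_bound[of "-B" B G G'])
      show "(G has_real_derivative G' t) (at t)" for t by (rule G_deriv)
      show "\<bar>G' t\<bar> \<le> M" if "t \<in> {-B..B}" for t using M(2) that by simp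
      show "g1 x \<in> {-B..B}" using B1[of x] unfolding B_def by (auto simp: abs_le_iff)
      show "g2 x \<in> {-B..B}" using B2[of x] unfolding B_def by (auto simp: abs_le_iff)
    qed
    ultimately show ?thesis unfolding D_def by simp
  qed
  have "D x = 0" for x by (rule gronwall0[OF Dd lip _ x0]) (use M in simp)
  then show ?thesis unfolding D_def by (intro ext) simp
qed



lemma int_le_const:
  fixes u :: "real \<Rightarrow> real"
  assumes "continuous_on UNIV u" "a \<le> b" "\<And>x. x \<in> {a..b} \<Longrightarrow> u x \<le> k"
  shows "integral {a..b} u \<le> (b - a) * k"
proof -
  have "integral {a..b} u \<le> integral {a..b} (\<lambda>x. k)"
    by (rule Henstock_Kurzweil_Integration.integral_le[OF int_cont[OF assms(1)] int_cont[OF continuous_on_const]])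
       (rule assms(3))
  also have "\<dots> = (b - a) * k" using assms(2) by (simp add: content_real)
  finally show ?thesis .
qed

context ctx begin

lemma J0_neg: "integral {0..1} (\<lambda>x. G'' (f x) * exp (- \<Phi> x)) < 0"
proof -
  define u where "u x = G'' (f x) * exp (- \<Phi> x)" for x
  have uc: "continuous_on UNIV u" unfolding u_def[abs_def]
    by (intro continuous_on_mult continuous_on_compose2[OF G''_cont f_cont] continuous_on_exp
        continuous_on_minus \<Phi>_cont) auto
  have l1: "l < L" and l2: "l < 1 - L" using ell_lt by auto
  have o1: "0 \<le> L - l" using l1 by simp
  have o2: "L - l \<le> L" using ell_pos by simp
  have o3: "L \<le> 1 - l" using l2 by simp
  have o4: "1 - l \<le> 1" using ell_pos by simp
  have ic: "\<And>a b. u integrable_on {a..b}" by (rule int_cont[OF uc])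
  have s1: "integral {0..1} u = integral {0..L - l} u + integral {L - l..1} u"
    using Henstock_Kurzweil_Integration.integral_combine[OF o1 _ ic, of 1] o2 o3 o4 by simp
  have s2: "integral {L - l..1} u = integral {L - l..L} u + integral {L..1} u"
    using Henstock_Kurzweil_Integration.integral_combine[OF o2 _ ic, of 1] o3 o4 by simp
  have s3: "integral {L..1} u = integral {L..1 - l} u + integral {1 - l..1} u"
    using Henstock_Kurzweil_Integration.integral_combine[OF o3 o4 ic] by simp
  have eb: "exp (- K1) \<le> exp (- \<Phi> x)" for x using \<Phi>_bound[of x] by simp
  have K2b: "u x \<le> K2 * ek" for x
  proof -
    have "u x \<le> \<bar>G'' (f x)\<bar> * exp (- \<Phi> x)" unfolding u_def by (intro mult_right_mono) auto
    also have "\<dots> \<le> K2 * ek" using K2_bound[of "f x"] f_bounds[of x] exp\<Phi>_le(2)[of x]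
      by (intro mult_mono) auto
    finally show ?thesis .
  qed
  have i1: "integral {0..L - l} u \<le> (L - l - 0) * (G'' p1 * exp (- K1))"
  proof (rule int_le_const[OF uc o1])
    fix x assume "x \<in> {0..L - l}"
    then have "f x = p1" by (rule f_p1)
    then show "u x \<le> G'' p1 * exp (- K1)" unfolding u_def
      using eb[of x] G''p1 by (simp add: mult_left_mono_neg)
  qed
  have i2: "integral {L - l..L} u \<le> (L - (L - l)) * (K2 * ek)"
    by (rule int_le_const[OF uc o2 K2b])
  have i3: "integral {L..1 - l} u \<le> (1 - l - L) * (G'' p2 * ek)"
  proof (rule int_le_const[OF uc o3])
    fix x assume "x \<in> {L..1 - l}"
    then have "f x = p2" by (rule f_p2)
    then show "u x \<le> G'' p2 * ek" unfolding u_def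
      using exp\<Phi>_le(2)[of x] G''p2 by (simp add: mult_left_mono)
  qed
  have i4: "integral {1 - l..1} u \<le> (1 - (1 - l)) * (K2 * ek)"
    by (rule int_le_const[OF uc o4 K2b])
  have "integral {0..1} u \<le> (L - l - 0) * (G'' p1 * exp (- K1)) + (L - (L - l)) * (K2 * ek)
      + (1 - l - L) * (G'' p2 * ek) + (1 - (1 - l)) * (K2 * ek)"
    using s1 s2 s3 i1 i2 i3 i4 by linarith
  also have "\<dots> = (L - l) * G'' p1 * exp (- K1) + ((1 - L - l) * G'' p2 + 2 * l * K2) * exp K1"
    unfolding ek_def by (simp add: algebra_simps)
  also have "\<dots> < 0" by (rule ell_cond)
  finally show ?thesis unfolding u_def .
qed

definition J :: real where "J = integral {0..1} (\<lambda>x. G'' (f x) * w x)"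

lemma J_neg: "J < 0"
proof -
  have "J = integral {0..1} (\<lambda>x. G'' (f x) * exp (- \<Phi> x)) * (1 / wden)"
    unfolding J_def w_def by (simp add: int_cmul2[symmetric] divide_inverse mult.assoc)
  then show ?thesis using J0_neg wden_pos by (simp add: divide_neg_pos)
qed


lemma sol_per:
  assumes cpd: "cp d" and fx: "\<And>x. d x = Tf c d x"
  shows "per_sol G (\<lambda>x. - f' x - G (f x)) (integral {0..1} f + c) (\<lambda>x. f x + d x)"
proof -
  define q where "q s = N s (d s)" for s
  have cpq: "cp q" unfolding q_def[abs_def] by (rule N_cp[OF cpd])
  have tf: "Tf c d x = c * w x + S0 q x" for x unfolding Tf_def q_def[abs_def] by (rule refl)
  have dfun: "d = (\<lambda>x. c * w x + S0 q x)"
    by (rule ext) (rule trans[OF fx tf])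
  have dd: "(d has_real_derivative (- a x * d x + (hq q - q x))) (at x)" for x
  proof -
    have D1: "((\<lambda>x. c * w x + S0 q x) has_real_derivative c * (- a x * w x) + (- a x * S0 q x + (hq q - q x))) (at x)"
      by (rule DERIV_add[OF DERIV_cmult[OF w_deriv] S0_deriv[OF cpq]])
    have E: "c * (- a x * w x) + (- a x * S0 q x + (hq q - q x)) = - a x * d x + (hq q - q x)"
      using tf[of x] fx[of x] by (simp add: algebra_simps)
    show ?thesis by (rule DERIV_cong[OF D1[folded dfun] E])
  qed
  define g' where "g' x = f' x + (- a x * d x + (hq q - q x))" for x
  have gd: "((\<lambda>x. f x + d x) has_real_derivative g' x) (at x)" for x
    unfolding g'_def by (rule DERIV_add[OF f_deriv dd])
  have gc: "continuous_on UNIV g'" unfolding g'_def[abs_def]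
    by (intro continuous_on_add continuous_on_diff continuous_on_mult continuous_on_minus
        f'_cont a_cont cpD(1)[OF cpd] cpD(1)[OF cpq] continuous_on_const)
  have ge: "g' x + G (f x + d x) + (- f' x - G (f x)) = hq q" for x
    unfolding g'_def q_def N_def by (simp add: algebra_simps)
  have gp: "f (x + 1) + d (x + 1) = f x + d x" for x using f_per[of x] cpD(2)[OF cpd, of x] by simp
  have "integral {0..1} (\<lambda>x. c * w x + S0 q x) = integral {0..1} (\<lambda>x. c * w x) + integral {0..1} (S0 q)"
    by (rule integral_add[OF int_cont int_cont]) (intro continuous_on_mult continuous_on_const cpD(1)[OF w_cp],
        rule cpD(1)[OF S0_cp[OF cpq]])
  also have "\<dots> = c" using w_int S0_int[OF cpq] by (simp add: int_cmul)
  finally have di: "integral {0..1} d = c" unfolding dfun[symmetric] .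
  have "integral {0..1} (\<lambda>x. f x + d x) = integral {0..1} f + integral {0..1} d"
    by (rule integral_add[OF int_cont[OF f_cont] int_cont[OF cpD(1)[OF cpd]]])
  then have gi: "integral {0..1} (\<lambda>x. f x + d x) = integral {0..1} f + c" using di by simp
  show ?thesis unfolding per_sol_def using gp gd gc ge gi by blast
qed

lemma taylor:
  assumes "0 < \<epsilon>"
  shows "\<exists>\<delta>>0. \<delta> \<le> 1 \<and> (\<forall>s t. \<bar>t\<bar> \<le> \<delta> \<longrightarrow> \<bar>G' (f s + t) - G' (f s) - G'' (f s) * t\<bar> \<le> \<epsilon> * \<bar>t\<bar>)"
proof -
  have "uniformly_continuous_on {p1 - 1..p2 + 1} G''"
    by (rule compact_uniformly_continuous[OF continuous_on_subset[OF G''_cont subset_UNIV] compact_Icc])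
  then obtain \<delta>' where \<delta>'0: "\<delta>' > 0" and \<delta>'1: "\<forall>x\<in>{p1 - 1..p2 + 1}. \<forall>x'\<in>{p1 - 1..p2 + 1}.
      dist x' x < \<delta>' \<longrightarrow> dist (G'' x') (G'' x) < \<epsilon>"
    unfolding uniformly_continuous_on_def using assms by blast
  have \<delta>'2: "dist (G'' x') (G'' x) < \<epsilon>" if "x \<in> {p1 - 1..p2 + 1}" "x' \<in> {p1 - 1..p2 + 1}" "dist x' x < \<delta>'" for x x'
    using \<delta>'1 that by blast
  define \<delta> where "\<delta> = min 1 (\<delta>' / 2)"
  have \<delta>: "0 < \<delta>" "\<delta> \<le> 1" "\<delta> < \<delta>'" unfolding \<delta>_def using \<delta>'0 by auto
  have "\<bar>G' (f s + t) - G' (f s) - G'' (f s) * t\<bar> \<le> \<epsilon> * \<bar>t\<bar>" if t: "\<bar>t\<bar> \<le> \<delta>" for s t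
  proof -
    define \<phi> where "\<phi> u = G' (f s + u) - G'' (f s) * u" for u
    have "\<bar>\<phi> t - \<phi> 0\<bar> \<le> \<epsilon> * \<bar>t - 0\<bar>"
    proof (rule lip_bound[of "-\<delta>" \<delta> \<phi> "\<lambda>u. G'' (f s + u) - G'' (f s)"])
      show "(\<phi> has_real_derivative G'' (f s + u) - G'' (f s)) (at u)" for u
      proof -
        have "((\<lambda>u. G' (f s + u)) has_real_derivative G'' (f s + u) * (0 + 1)) (at u)"
          by (rule DERIV_chain2[OF G'_deriv]) (intro derivative_intros)
        then have "(\<phi> has_real_derivative G'' (f s + u) * (0 + 1) - G'' (f s) * 1) (at u)"
          unfolding \<phi>_def[abs_def] by (rule DERIV_diff[OF _ DERIV_cmult[OF DERIV_ident]])
        then show ?thesis by simp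
      qed
      show "\<bar>G'' (f s + u) - G'' (f s)\<bar> \<le> \<epsilon>" if "u \<in> {-\<delta>..\<delta>}" for u
      proof -
        have u: "\<bar>u\<bar> \<le> 1" "\<bar>u\<bar> < \<delta>'" using that \<delta> by (auto simp: abs_le_iff)
        have "f s + u \<in> {p1 - 1..p2 + 1}" "f s \<in> {p1 - 1..p2 + 1}"
          using f_bounds[of s] u by (auto simp: abs_le_iff)
        from \<delta>'2[OF this(2) this(1)] u show ?thesis by (simp add: dist_real_def)
      qed
      show "t \<in> {-\<delta>..\<delta>}" using t by (simp add: abs_le_iff)
      show "0 \<in> {-\<delta>..\<delta>}" using \<delta> by simp
    qed
    then show ?thesis unfolding \<phi>_def by (simp add: algebra_simps)
  qed
  then show ?thesis using \<delta> by blast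
qed


lemma main_loc:
  "\<exists>c1>0. \<forall>c. 0 < \<bar>c\<bar> \<and> \<bar>c\<bar> < c1 \<longrightarrow>
     (\<exists>d. per_sol G (\<lambda>x. - f' x - G (f x)) (integral {0..1} f + c) (\<lambda>x. f x + d x) \<and>
          (0 < c \<longrightarrow> integral {0..1} (\<lambda>x. G' (f x + d x)) < 0) \<and>
          (c < 0 \<longrightarrow> 0 < integral {0..1} (\<lambda>x. G' (f x + d x))))"
proof -
  have ek2: "0 < ek * ek" using ek_pos by simp
  define \<epsilon> where "\<epsilon> = - J / (4 * (ek * ek))"
  have mJ: "0 < - J" using J_neg by simp
  have \<epsilon>: "0 < \<epsilon>" unfolding \<epsilon>_def using mJ ek2 by (intro divide_pos_pos) auto
  obtain \<delta> where \<delta>: "\<delta> > 0" "\<delta> \<le> 1"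
    and tay: "\<And>s t. \<bar>t\<bar> \<le> \<delta> \<Longrightarrow> \<bar>G' (f s + t) - G' (f s) - G'' (f s) * t\<bar> \<le> \<epsilon> * \<bar>t\<bar>"
    using taylor[OF \<epsilon>] by blast
  define Kq where "Kq = M2 * (Qc * M2 * 4 * ((ek * ek) * (ek * ek)))"
  have Kq: "0 < Kq" unfolding Kq_def using M2_ge1 Qc_pos ek2 by simp
  define c1 where "c1 = min c0 (min (\<delta> / (2 * (ek * ek))) (- J / (4 * Kq)))"
  have "0 < - J / (4 * Kq)" using mJ Kq by (intro divide_pos_pos) auto
  moreover have "0 < \<delta> / (2 * (ek * ek))" using \<delta> ek2 by (intro divide_pos_pos) auto
  ultimately have c1: "0 < c1" unfolding c1_def using c0_pos by simp
  have M2f: "\<bar>G'' (f x)\<bar> \<le> M2" for x using f_bounds[of x] by (intro M2_bound) auto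
  have "0 < \<bar>c\<bar> \<and> \<bar>c\<bar> < c1 \<longrightarrow>
     (\<exists>d. per_sol G (\<lambda>x. - f' x - G (f x)) (integral {0..1} f + c) (\<lambda>x. f x + d x) \<and>
          (0 < c \<longrightarrow> integral {0..1} (\<lambda>x. G' (f x + d x)) < 0) \<and>
          (c < 0 \<longrightarrow> 0 < integral {0..1} (\<lambda>x. G' (f x + d x))))" for c
  proof
    assume cc: "0 < \<bar>c\<bar> \<and> \<bar>c\<bar> < c1"
    have cc0: "\<bar>c\<bar> \<le> c0" using cc unfolding c1_def by simp
    have ccd: "\<bar>c\<bar> \<le> \<delta> / (2 * (ek * ek))" using cc unfolding c1_def by simp
    have ccJ: "\<bar>c\<bar> \<le> - J / (4 * Kq)" using cc unfolding c1_def by simp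
    obtain d where cpd: "cp d" and fx: "\<And>x. d x = Tf c d x"
      and db: "\<And>x. \<bar>d x\<bar> \<le> 2 * \<bar>c\<bar> * (ek * ek)"
      and dw: "\<And>x. \<bar>d x - c * w x\<bar> \<le> Qc * M2 * (2 * \<bar>c\<bar> * (ek * ek))^2"
      using sol_exists[OF cc0] by blast
    have ps: "per_sol G (\<lambda>x. - f' x - G (f x)) (integral {0..1} f + c) (\<lambda>x. f x + d x)"
      by (rule sol_per[OF cpd fx])
    have dd: "\<bar>d x\<bar> \<le> \<delta>" for x
    proof -
      have "2 * \<bar>c\<bar> * (ek * ek) \<le> 2 * (\<delta> / (2 * (ek * ek))) * (ek * ek)"
        using ccd ek2 by (intro mult_right_mono) auto
      also have "\<dots> = \<delta>" using ek_pos by simp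
      finally show ?thesis using db[of x] by linarith
    qed
    define R where "R x = G' (f x + d x) - G' (f x) - c * (G'' (f x) * w x)" for x
    define bR where "bR = 3 / 4 * (- J) * \<bar>c\<bar>"
    have Rb: "\<bar>R x\<bar> \<le> bR" for x
    proof -
      have e: "R x = (G' (f x + d x) - G' (f x) - G'' (f x) * d x) + G'' (f x) * (d x - c * w x)"
        unfolding R_def by (simp add: algebra_simps)
      have t1: "\<bar>G' (f x + d x) - G' (f x) - G'' (f x) * d x\<bar> \<le> \<epsilon> * (2 * \<bar>c\<bar> * (ek * ek))"
        using tay[OF dd[of x]] db[of x] \<epsilon> by (meson mult_left_mono less_imp_le order_trans)
      have "\<epsilon> * (2 * \<bar>c\<bar> * (ek * ek)) = (- J / 2) * \<bar>c\<bar>" unfolding \<epsilon>_def using ek_pos by simp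
      note t1 = t1[unfolded this]
      have "\<bar>G'' (f x) * (d x - c * w x)\<bar> \<le> M2 * (Qc * M2 * (2 * \<bar>c\<bar> * (ek * ek))^2)"
        unfolding abs_mult by (rule mult_mono[OF M2f dw]) (use M2_ge1 in auto)
      also have "\<dots> = Kq * \<bar>c\<bar> * \<bar>c\<bar>" unfolding Kq_def by (simp add: power2_eq_square algebra_simps)
      also have "\<dots> \<le> Kq * (- J / (4 * Kq)) * \<bar>c\<bar>"
        using ccJ Kq by (intro mult_right_mono mult_left_mono) auto
      also have "\<dots> = (- J / 4) * \<bar>c\<bar>" using Kq by simp
      finally have t2: "\<bar>G'' (f x) * (d x - c * w x)\<bar> \<le> (- J / 4) * \<bar>c\<bar>" .
      have "\<bar>R x\<bar> \<le> (- J / 2) * \<bar>c\<bar> + (- J / 4) * \<bar>c\<bar>" unfolding e using t1 t2 by linarith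
      also have "\<dots> = bR" unfolding bR_def by (simp add: algebra_simps)
      finally show ?thesis .
    qed
    have c_fd: "continuous_on UNIV (\<lambda>x. G' (f x + d x))"
      by (rule continuous_on_compose2[OF G'_cont continuous_on_add[OF f_cont cpD(1)[OF cpd]]]) auto
    have c_f: "continuous_on UNIV (\<lambda>x. G' (f x))"
      by (rule continuous_on_compose2[OF G'_cont f_cont]) auto
    have c_w: "continuous_on UNIV (\<lambda>x. G'' (f x) * w x)"
      by (rule continuous_on_mult[OF continuous_on_compose2[OF G''_cont f_cont] cpD(1)[OF w_cp]]) auto
    have c_cw: "continuous_on UNIV (\<lambda>x. c * (G'' (f x) * w x))"
      by (rule continuous_on_mult[OF continuous_on_const c_w])
    have c_R: "continuous_on UNIV R" unfolding R_def[abs_def]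
      by (rule continuous_on_diff[OF continuous_on_diff[OF c_fd c_f] c_cw])
    define Iv where "Iv = integral {0..1} (\<lambda>x. G' (f x + d x))"
    have "integral {0..1} R = integral {0..1} (\<lambda>x. G' (f x + d x) - G' (f x)) - integral {0..1} (\<lambda>x. c * (G'' (f x) * w x))"
      unfolding R_def[abs_def]
      by (rule integral_diff[OF int_cont[OF continuous_on_diff[OF c_fd c_f]] int_cont[OF c_cw]])
    also have "integral {0..1} (\<lambda>x. G' (f x + d x) - G' (f x)) = Iv - integral {0..1} (\<lambda>x. G' (f x))"
      unfolding Iv_def by (rule integral_diff[OF int_cont[OF c_fd] int_cont[OF c_f]])
    also have "integral {0..1} (\<lambda>x. c * (G'' (f x) * w x)) = c * J"
      unfolding J_def by (rule int_cmul)
    finally have IR: "integral {0..1} R = Iv - c * J" using f_int by simp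
    have "\<bar>integral {0..1} R\<bar> \<le> bR"
      using int_bound01[OF c_R, of bR 1] Rb by simp
    then have main: "\<bar>Iv - c * J\<bar> \<le> bR" using IR by simp
    have pos: "0 < c \<longrightarrow> Iv < 0"
    proof
      assume "0 < c"
      then have "bR = - (3 / 4) * (c * J)" "c * J < 0" unfolding bR_def using J_neg
        by (auto simp: mult_pos_neg algebra_simps)
      then show "Iv < 0" using main unfolding abs_le_iff by linarith
    qed
    have neg: "c < 0 \<longrightarrow> 0 < Iv"
    proof
      assume "c < 0"
      then have "bR = (3 / 4) * (c * J)" "0 < c * J" unfolding bR_def using J_neg
        by (auto simp: mult_neg_neg algebra_simps)
      then show "0 < Iv" using main unfolding abs_le_iff by linarith
    qed
    show "\<exists>d. per_sol G (\<lambda>x. - f' x - G (f x)) (integral {0..1} f + c) (\<lambda>x. f x + d x) \<and>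
          (0 < c \<longrightarrow> integral {0..1} (\<lambda>x. G' (f x + d x)) < 0) \<and>
          (c < 0 \<longrightarrow> 0 < integral {0..1} (\<lambda>x. G' (f x + d x)))"
      using ps pos neg unfolding Iv_def by blast
  qed
  then show ?thesis using c1 by blast
qed

end


theorem lemma5p4:
  fixes G G' G'' :: "real \<Rightarrow> real" and f f' :: "real \<Rightarrow> real"
    and p1 p2 l L K1 K2 \<theta>0 :: real and V :: "real \<Rightarrow> real"
  assumes G_deriv: "\<And>x. (G has_real_derivative G' x) (at x)"
    and G'_deriv: "\<And>x. (G' has_real_derivative G'' x) (at x)"
    and G''_cont: "continuous_on UNIV G''"
    and coercive: "filterlim G at_top at_top" "filterlim G at_top at_bot"
    and p12: "p1 < p2"
    and Gp1: "G' p1 < 0" and Gp2: "0 < G' p2"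
    and L_def: "L = G' p2 / (G' p2 - G' p1)"
    and K1_def: "K1 = Sup ((\<lambda>p. \<bar>G' p\<bar>) ` {p1..p2})"
    and K2_def: "K2 = Sup ((\<lambda>p. \<bar>G'' p\<bar>) ` {p1..p2})"
    and f_per: "\<And>x. f (x + 1) = f x"
    and f_deriv: "\<And>x. (f has_real_derivative f' x) (at x)"
    and f'_lip: "\<exists>M. lipschitz_on M UNIV f'"
    and f_bounds: "\<And>x. p1 \<le> f x \<and> f x \<le> p2"
    and f_p1: "\<And>x. x \<in> {0..L - l} \<Longrightarrow> f x = p1"
    and f_p2: "\<And>x. x \<in> {L..1 - l} \<Longrightarrow> f x = p2"
    and f_int: "integral {0..1} (\<lambda>x. G' (f x)) = 0"
    and V_def: "V = (\<lambda>x. - f' x - G (f x))"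
    and theta0_def: "\<theta>0 = integral {0..1} f"
    and G''p1: "G'' p1 < 0" and G''p2: "G'' p2 \<ge> 0"
    and Gcond: "G'' p1 * G' p2 * exp (- K1) < G'' p2 * G' p1 * exp K1"
    and ell_pos: "0 < l" and ell_lt: "l < min L (1 - L)"
    and ell_cond: "(L - l) * G'' p1 * exp (- K1)
                   + ((1 - L - l) * G'' p2 + 2 * l * K2) * exp K1 < 0"
  shows "\<forall>\<^sub>F c in at_right 0.
           I_one G G' V (\<theta>0 + c) < 0 \<and> 0 < I_one G G' V (\<theta>0 - c)"
proof -
  interpret ctx G G' G'' f f' p1 p2 l L K1 K2
    by (rule ctx.intro) (fact G_deriv G'_deriv G''_cont p12 Gp1 Gp2 L_def K1_def K2_def f_per f_deriv
        f'_lip f_bounds f_p1 f_p2 f_int G''p1 G''p2 ell_pos ell_lt ell_cond)+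
  obtain c1 where c1: "c1 > 0" and P: "\<And>c. 0 < \<bar>c\<bar> \<Longrightarrow> \<bar>c\<bar> < c1 \<Longrightarrow>
     (\<exists>d. per_sol G (\<lambda>x. - f' x - G (f x)) (integral {0..1} f + c) (\<lambda>x. f x + d x) \<and>
          (0 < c \<longrightarrow> integral {0..1} (\<lambda>x. G' (f x + d x)) < 0) \<and>
          (c < 0 \<longrightarrow> 0 < integral {0..1} (\<lambda>x. G' (f x + d x))))"
    using main_loc by blast
  have Ic: "I_one G G' V (\<theta>0 + c) = integral {0..1} (\<lambda>x. G' (f x + d x))"
    if "per_sol G (\<lambda>x. - f' x - G (f x)) (integral {0..1} f + c) (\<lambda>x. f x + d x)" for c d
  proof -
    have "f_theta G V (\<theta>0 + c) = (\<lambda>x. f x + d x)"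
      unfolding f_theta_def V_def theta0_def
    proof (rule the_equality)
      show "per_sol G (\<lambda>x. - f' x - G (f x)) (integral {0..1} f + c) (\<lambda>x. f x + d x)" by (rule that)
      show "g = (\<lambda>x. f x + d x)" if "per_sol G (\<lambda>x. - f' x - G (f x)) (integral {0..1} f + c) g" for g
        by (rule per_sol_unique[OF G_deriv G'_cont that \<open>per_sol G _ _ (\<lambda>x. f x + d x)\<close>])
    qed
    then show ?thesis unfolding I_one_def by simp
  qed
  have "\<forall>c>0. c < c1 \<longrightarrow> I_one G G' V (\<theta>0 + c) < 0 \<and> 0 < I_one G G' V (\<theta>0 - c)"
  proof (intro allI impI conjI)
    fix c :: real assume c: "0 < c" "c < c1"
    obtain d where d: "per_sol G (\<lambda>x. - f' x - G (f x)) (integral {0..1} f + c) (\<lambda>x. f x + d x)"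
      "integral {0..1} (\<lambda>x. G' (f x + d x)) < 0"
      using P[of c] c by auto
    show "I_one G G' V (\<theta>0 + c) < 0" using Ic[OF d(1)] d(2) by simp
    obtain e where e: "per_sol G (\<lambda>x. - f' x - G (f x)) (integral {0..1} f + (- c)) (\<lambda>x. f x + e x)"
      "0 < integral {0..1} (\<lambda>x. G' (f x + e x))"
      using P[of "- c"] c by auto
    show "0 < I_one G G' V (\<theta>0 - c)" using Ic[OF e(1)] e(2) by simp
  qed
  then show ?thesis unfolding eventually_at_right_field using c1 by blast
qed


end
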